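(* Let $\mathcal{F}=\{S_1,\dots,S_m\}$ be a set system on a ground set $X$. Then there exist sets $C_1,\dots,C_m\in\mathcal{B}^2_2$ such that for every $I\subset[m]$ we have $\bigcap_{i\in I}S_i\neq\emptyset$ if and only if $\bigcap_{i\in I}C_i\neq\emptyset$.
   Context: For positive integers $k,d$, $\mathcal{B}^d_k$ denotes the collection of subsets of $\mathbb{R}^d$ that are solution sets of systems of polynomial inequalities (each strict or non-strict) in $d$ real variables with real polynomials of degree at most $k$. $[m]=\{1,\dots,m\}$. *)

theory Defs
  imports "HOL-Analysis.Analysis"
begin

definition poly_eval :: "nat \<Rightarrow> (('n::finite \<Rightarrow> nat) \<Rightarrow> real) \<Rightarrow> real ^ 'n \<Rightarrow> real" where
  "poly_eval k c x = (\<Sum>\<alpha> \<in> {\<alpha>::'n \<Rightarrow> nat. sum \<alpha> UNIV \<le> k}. c \<alpha> * (\<Prod>i\<in>UNIV. (x $ i) ^ (\<alpha> i)))"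

text \<open>B k (at type real^'n, i.e. d = CARD('n)): solution sets of finite systems of
  polynomial inequalities p > 0 (strict, flag True) or p \<ge> 0 (non-strict, flag False)
  with polynomials of degree at most k.\<close>
definition semialg_B :: "nat \<Rightarrow> (real ^ 'n::finite) set set" where
  "semialg_B k = {S. \<exists>ps :: ((('n \<Rightarrow> nat) \<Rightarrow> real) \<times> bool) list.
      S = {x. \<forall>(c, strict) \<in> set ps.
              (if strict then poly_eval k c x > 0 else poly_eval k c x \<ge> 0)}}"

end

theory Submission
  imports Defs
begin

lemma fin_alpha: "finite {\<alpha>::2 \<Rightarrow> nat. sum \<alpha> UNIV \<le> k}"
proof -
  have "{\<alpha>::2 \<Rightarrow> nat. sum \<alpha> UNIV \<le> k} \<subseteq> PiE UNIV (\<lambda>_. {..k})"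
  proof
    fix \<alpha> :: "2 \<Rightarrow> nat" assume "\<alpha> \<in> {\<alpha>. sum \<alpha> UNIV \<le> k}"
    then have "\<alpha> i \<le> k" for i
      using member_le_sum[of i UNIV \<alpha>] by auto
    then show "\<alpha> \<in> PiE UNIV (\<lambda>_. {..k})" by auto
  qed
  moreover have "finite (PiE (UNIV::2 set) (\<lambda>_. {..k::nat}))" by (intro finite_PiE) auto
  ultimately show ?thesis by (rule finite_subset)
qed

lemma quad_poly:
  "\<exists>c. \<forall>x::real^2. poly_eval 2 c x = a * (x$1)^2 + b * (x$1) + c0"
proof -
  define A2 :: "2 \<Rightarrow> nat" where "A2 = (\<lambda>i. if i = 1 then 2 else 0)"
  define A1 :: "2 \<Rightarrow> nat" where "A1 = (\<lambda>i. if i = 1 then 1 else 0)"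
  define A0 :: "2 \<Rightarrow> nat" where "A0 = (\<lambda>i. 0)"
  define D where "D = {\<alpha>::2 \<Rightarrow> nat. sum \<alpha> UNIV \<le> 2}"
  have fD: "finite D" unfolding D_def by (rule fin_alpha)
  have u: "(1::2) \<noteq> 2" by simp
  have A2D: "A2 \<in> D" "A1 \<in> D" "A0 \<in> D" unfolding D_def A2_def A1_def A0_def UNIV_2 using u by auto
  have ne: "A2 \<noteq> A1" "A2 \<noteq> A0" "A1 \<noteq> A0" unfolding A2_def A1_def A0_def by (auto simp: fun_eq_iff)
  define c where "c = (\<lambda>\<alpha>. (if \<alpha> = A2 then a else 0) + (if \<alpha> = A1 then b else 0) + (if \<alpha> = A0 then c0 else 0))"
  show ?thesis
  proof (intro exI allI)
    fix x :: "real^2"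
    define P where "P = (\<lambda>\<alpha>. \<Prod>i\<in>UNIV. (x $ i) ^ (\<alpha> i))"
    have P2: "P A2 = (x$1)^2" "P A1 = x$1" "P A0 = 1"
      unfolding P_def A2_def A1_def A0_def UNIV_2 using u by auto
    have "poly_eval 2 c x = (\<Sum>\<alpha>\<in>D. c \<alpha> * P \<alpha>)" unfolding poly_eval_def D_def P_def by simp
    also have "\<dots> = (\<Sum>\<alpha>\<in>D. (if \<alpha> = A2 then a * P A2 else 0) + (if \<alpha> = A1 then b * P A1 else 0) + (if \<alpha> = A0 then c0 * P A0 else 0))"
      unfolding c_def by (intro sum.cong) (auto simp: algebra_simps)
    also have "\<dots> = a * (x$1)^2 + b * (x$1) + c0"
      using fD A2D by (simp add: sum.distrib P2)
    finally show "poly_eval 2 c x = a * (x$1)^2 + b * (x$1) + c0" .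
  qed
qed

lemma quad_B:
  fixes L :: "(real \<times> real \<times> real \<times> bool) list"
  shows "{x::real^2. \<forall>(a,b,c0,s) \<in> set L. (if s then a * (x$1)^2 + b * (x$1) + c0 > 0
                  else a * (x$1)^2 + b * (x$1) + c0 \<ge> 0)} \<in> semialg_B 2"
proof -
  have "\<forall>q. \<exists>c. \<forall>x::real^2. poly_eval 2 c x = fst q * (x$1)^2 + fst (snd q) * (x$1) + snd (snd q)"
    using quad_poly by blast
  then obtain cf where cf: "\<And>q x. poly_eval 2 (cf q) (x::real^2) = fst q * (x$1)^2 + fst (snd q) * (x$1) + snd (snd q)"
    by metis
  define ps where "ps = map (\<lambda>(a,b,c0,s). (cf (a,b,c0), s)) L"
  show ?thesis unfolding semialg_B_def
    apply (rule CollectI, rule exI[of _ ps])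
    unfolding ps_def using cf by (auto split: prod.splits) 
qed

lemma nat_set_B:
  fixes T :: "nat set" and N :: nat
  assumes TN: "T \<subseteq> {..<N}"
  shows "{x::real^2. x$1 \<in> real ` T} \<in> semialg_B 2"
proof -
  define L :: "(real \<times> real \<times> real \<times> bool) list" where
    "L = [(0,1,0,False), (0,-1,real N - 1,False)]
       @ map (\<lambda>j. (1, -(2*real j+1), real j * (real j + 1), False)) [0..<N]
       @ map (\<lambda>j. (1, -2*real j, (real j)^2, True)) (filter (\<lambda>j. j \<notin> T) [0..<N])"
  have eq: "{x::real^2. \<forall>(a,b,c0,s) \<in> set L. (if s then a * (x$1)^2 + b * (x$1) + c0 > 0
                  else a * (x$1)^2 + b * (x$1) + c0 \<ge> 0)} = {x::real^2. x$1 \<in> real ` T}"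
  proof (intro set_eqI iffI; simp only: mem_Collect_eq)
    fix x :: "real^2"
    assume H: "\<forall>(a,b,c0,s) \<in> set L. (if s then a * (x$1)^2 + b * (x$1) + c0 > 0
                  else a * (x$1)^2 + b * (x$1) + c0 \<ge> 0)"
    define y where "y = x$1"
    have h0: "y \<ge> 0" "y \<le> real N - 1" using H unfolding L_def y_def by auto
    have h1: "(y - real j) * (y - real j - 1) \<ge> 0" if "j < N" for j
    proof -
      have "(1, -(2*real j+1), real j * (real j + 1), False) \<in> set L" unfolding L_def using that by auto
      with H have "1 * y^2 + (-(2*real j+1)) * y + real j * (real j + 1) \<ge> 0" unfolding y_def by fastforce
      then show ?thesis by (simp add: algebra_simps power2_eq_square)
    qed
    have h2: "(y - real j)^2 > 0" if "j < N" "j \<notin> T" for j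
    proof -
      have "(1, -2*real j, (real j)^2, True) \<in> set L" unfolding L_def using that by auto
      with H have "1 * y^2 + (-2*real j) * y + (real j)^2 > 0" unfolding y_def by fastforce
      then show ?thesis by (simp add: algebra_simps power2_eq_square)
    qed
    define k where "k = nat (floor y)"
    have kle: "real k \<le> y" "y < real k + 1" unfolding k_def using h0 by linarith+
    have kN: "k < N" using kle h0 by linarith
    have "y = real k"
    proof (rule ccontr)
      assume "y \<noteq> real k"
      then have "real k < y" using kle by auto
      moreover have "(y - real k) * (y - real k - 1) < 0" using \<open>real k < y\<close> kle
        by (intro mult_pos_neg) auto
      ultimately show False using h1[OF kN] by linarith
    qed
    moreover have "k \<in> T" using h2[OF kN] \<open>y = real k\<close> by (cases "k \<in> T") auto
    ultimately show "x$1 \<in> real ` T" unfolding y_def by blast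
  next
    fix x :: "real^2"
    assume "x$1 \<in> real ` T"
    then obtain t where t: "t \<in> T" "x$1 = real t" by blast
    have tN: "t < N" using t TN by auto
    have p: "(real t - real j) * (real t - real j - 1) \<ge> 0" for j
    proof (cases "t \<le> j")
      case True
      then show ?thesis by (intro mult_nonpos_nonpos) auto
    next
      case False
      then show ?thesis by (intro mult_nonneg_nonneg) auto
    qed
    have q: "(real t - real j)^2 > 0" if "j \<notin> T" for j
      using that t by auto
    show "\<forall>(a,b,c0,s) \<in> set L. (if s then a * (x$1)^2 + b * (x$1) + c0 > 0
                  else a * (x$1)^2 + b * (x$1) + c0 \<ge> 0)"
      unfolding L_def using tN p q t(2)
      by (auto simp: algebra_simps power2_eq_square)
  qed
  show ?thesis using quad_B[of L] unfolding eq .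
qed

theorem proposition1p7:
  fixes X :: "'a set" and S :: "nat \<Rightarrow> 'a set" and m :: nat
  assumes "\<And>i. i \<in> {1..m} \<Longrightarrow> S i \<subseteq> X"
  shows "\<exists>C :: nat \<Rightarrow> (real ^ 2) set.
           (\<forall>i \<in> {1..m}. C i \<in> semialg_B 2) \<and>
           (\<forall>I. I \<subseteq> {1..m} \<and> I \<noteq> {} \<longrightarrow>
              ((\<Inter>i\<in>I. S i) \<noteq> {} \<longleftrightarrow> (\<Inter>i\<in>I. C i) \<noteq> {}))"
proof -
  obtain n and g :: "nat \<Rightarrow> nat set" where g: "Pow {1..m} = g ` {i. i < n}"
    using finite_imp_nat_seg_image_inj_on[of "Pow {1..m}"] by auto
  define T where "T = (\<lambda>i. {j. j < n \<and> i \<in> g j \<and> (\<Inter>k\<in>g j. S k) \<noteq> {}})"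
  define C where "C = (\<lambda>i. {x::real^2. x$1 \<in> real ` T i})"
  show ?thesis
  proof (intro exI[of _ C] conjI ballI allI impI)
    fix i show "C i \<in> semialg_B 2" unfolding C_def by (rule nat_set_B[of _ n]) (auto simp: T_def)
  next
    fix I :: "nat set" assume I: "I \<subseteq> {1..m} \<and> I \<noteq> {}"
    show "(\<Inter>i\<in>I. S i) \<noteq> {} \<longleftrightarrow> (\<Inter>i\<in>I. C i) \<noteq> {}"
    proof
      assume ne: "(\<Inter>i\<in>I. S i) \<noteq> {}"
      have "I \<in> g ` {i. i < n}" using I g by auto
      then obtain j where j: "j < n" "g j = I" by auto
      have "(\<chi> k. real j) \<in> (\<Inter>i\<in>I. C i)" unfolding C_def T_def using j ne by auto
      then show "(\<Inter>i\<in>I. C i) \<noteq> {}" by blast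
    next
      assume "(\<Inter>i\<in>I. C i) \<noteq> {}"
      then obtain x where xI: "x \<in> (\<Inter>i\<in>I. C i)" by blast
      have x: "x$1 \<in> real ` T i" if "i \<in> I" for i using xI that unfolding C_def by auto
      obtain i0 where i0: "i0 \<in> I" using I by auto
      obtain j where j: "j \<in> T i0" "x$1 = real j" using x[OF i0] by auto
      have "j \<in> T i" if "i \<in> I" for i using x[OF that] j(2) by auto
      then have sub: "I \<subseteq> g j" and ne: "(\<Inter>k\<in>g j. S k) \<noteq> {}" using j(1) unfolding T_def by auto
      have "(\<Inter>k\<in>g j. S k) \<subseteq> (\<Inter>i\<in>I. S i)" using sub i0 by auto
      then show "(\<Inter>i\<in>I. S i) \<noteq> {}" using ne by blast
    qed
  qed
qed

end
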